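(* Let $0<k<n$, and let $A\in\mathbb{Z}^{k\times n}$ and $B\in\mathbb{Z}^{(n-k)\times n}$ be integer matrices of full row rank such that $A B^T=0$. Then \[ \operatorname{ndet}(L_R(A))=\operatorname{ndet}(L_R(B)), \] that is, \[ \frac{\sqrt{\det(AA^T)}}{\det(L_C(A))}=\frac{\sqrt{\det(BB^T)}}{\det(L_C(B))}. \]
   Context: For an integer matrix $M\in\mathbb{Z}^{m\times n}$, $L_R(M)\subseteq\mathbb{Z}^n$ denotes the lattice generated by the rows of $M$ and $L_C(M)\subseteq\mathbb{Z}^m$ the lattice generated by the columns of $M$. For a lattice $L$ with basis matrix $V$ (a matrix whose rows form a $\mathbb{Z}$-basis of $L$), $\det(L)=\sqrt{\det(VV^T)}$, independent of the choice of basis. For a lattice $\Lambda$ with basis matrix $M$ of full row rank, the normalized determinant is $\operatorname{ndet}(\Lambda)=\det(L_R(M))/\det(L_C(M))$. *)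

theory Defs
  imports "Jordan_Normal_Form.Determinant" "HOL.Real"
begin

definition L_R :: "int mat \<Rightarrow> int vec set" where
  "L_R M = {transpose_mat M *\<^sub>v c | c. c \<in> carrier_vec (dim_row M)}"

definition L_C :: "int mat \<Rightarrow> int vec set" where
  "L_C M = {M *\<^sub>v c | c. c \<in> carrier_vec (dim_col M)}"

definition full_row_rank :: "int mat \<Rightarrow> bool" where
  "full_row_rank M \<longleftrightarrow>
     (\<forall>c \<in> carrier_vec (dim_row M).
        transpose_mat (map_mat (of_int :: int \<Rightarrow> rat) M) *\<^sub>v c = 0\<^sub>v (dim_col M) \<longrightarrow>
        c = 0\<^sub>v (dim_row M))"

definition lattice_basis :: "int mat \<Rightarrow> int vec set \<Rightarrow> bool" where
  "lattice_basis V L \<longleftrightarrow> full_row_rank V \<and> L_R V = L"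

definition lattice_det :: "int vec set \<Rightarrow> real" where
  "lattice_det L = (SOME d. \<exists>V. lattice_basis V L \<and>
       d = sqrt (real_of_int (det (V * transpose_mat V))))"

definition ndet :: "int vec set \<Rightarrow> real" where
  "ndet \<Lambda> = (SOME d. \<exists>M. lattice_basis M \<Lambda> \<and>
       d = lattice_det (L_R M) / lattice_det (L_C M))"

end

theory Submission
  imports Defs
begin



lemma frr_det:
  assumes M: "M \<in> carrier_mat r m" and f: "full_row_rank M"
  shows "det (M * transpose_mat M) \<noteq> 0"
proof
  assume "det (M * transpose_mat M) = 0"
  then obtain v where v: "v \<in> carrier_vec r" "v \<noteq> 0\<^sub>v r" "(M * transpose_mat M) *\<^sub>v v = 0\<^sub>v r"
    using det_0_iff_vec_prod_zero[of "M * transpose_mat M" r] M by auto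
  define w where "w = transpose_mat M *\<^sub>v v"
  have w: "w \<in> carrier_vec m" using M v unfolding w_def by auto
  have "M *\<^sub>v w = 0\<^sub>v r" unfolding w_def using v M
    by (metis assoc_mult_mat_vec carrier_matD(1) carrier_matD(2) carrier_vecD transpose_carrier_mat)
  hence "w \<bullet> w = 0" unfolding w_def
    using transpose_vec_mult_scalar[of M r m w v] M v w
    by (metis scalar_prod_right_zero w_def)
  hence "(\<Sum>i<m. w $ i * w $ i) = 0" using w unfolding scalar_prod_def
    by (simp add: atLeast0LessThan)
  hence "\<forall>i\<in>{..<m}. w $ i * w $ i = 0"
    by (subst sum_nonneg_eq_0_iff[symmetric], auto)
  hence w0: "w = 0\<^sub>v m" using w by (intro eq_vecI, auto)
  have "transpose_mat (map_mat (of_int :: int \<Rightarrow> rat) M) *\<^sub>v map_vec of_int v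
       = map_vec of_int (transpose_mat M *\<^sub>v v)"
    using M v by (simp add: map_mat_transpose[symmetric] of_int_hom.mult_mat_vec_hom)
  also have "\<dots> = 0\<^sub>v m" using w0 unfolding w_def by auto
  finally have "map_vec (of_int :: int \<Rightarrow> rat) v = 0\<^sub>v r"
    using f M v unfolding full_row_rank_def by auto
  hence "v = 0\<^sub>v r" using v
    by (intro eq_vecI, auto dest!: arg_cong[of _ _ "\<lambda>x. x $ _"]) 
  with v show False by auto
qed




lemma det_frr:
  assumes V: "V \<in> carrier_mat r r" and d: "det V \<noteq> 0"
  shows "full_row_rank V"
  unfolding full_row_rank_def
proof (intro ballI impI, rule ccontr)
  fix c :: "rat vec"
  assume c: "c \<in> carrier_vec (dim_row V)"
    and e: "transpose_mat (map_mat of_int V) *\<^sub>v c = 0\<^sub>v (dim_col V)"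
    and ne: "c \<noteq> 0\<^sub>v (dim_row V)"
  have "det (transpose_mat (map_mat (of_int :: int \<Rightarrow> rat) V)) = 0"
    using det_0_iff_vec_prod_zero[of "transpose_mat (map_mat (of_int :: int \<Rightarrow> rat) V)" r] V c e ne
    by auto
  hence "(of_int (det V) :: rat) = 0" using V
    by (simp add: det_transpose of_int_hom.hom_det)
  with d show False by simp
qed

lemma rowmult:
  fixes E V :: "int mat"
  assumes E: "E \<in> carrier_mat r s" and V: "V \<in> carrier_mat s m" and i: "i < r"
  shows "transpose_mat V *\<^sub>v row E i = row (E * V) i"
proof (rule eq_vecI)
  fix j assume "j < dim_vec (row (E * V) i)"
  hence j: "j < m" using E V by auto
  have "col V j \<bullet> row E i = row E i \<bullet> col V j"
  proof -
    have c1: "col V j \<in> carrier_vec s" using V j by simp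
    have c2: "row E i \<in> carrier_vec s" using E i by simp
    show ?thesis using comm_scalar_prod[OF c1 c2] .
  qed
  thus "(transpose_mat V *\<^sub>v row E i) $ j = row (E * V) i $ j" using E V i j by auto
qed (insert E V, auto)

lemma frr_cancel:
  assumes E: "E \<in> carrier_mat r s" and F: "F \<in> carrier_mat r s" and V: "V \<in> carrier_mat s m"
    and f: "full_row_rank V" and eq: "E * V = F * V"
  shows "E = F"
proof (rule eq_rowI)
  show "dim_row E = dim_row F" "dim_col E = dim_col F" using E F by auto
  fix i assume "i < dim_row F" hence i: "i < r" using F by auto
  have z: "transpose_mat V *\<^sub>v (row E i - row F i) = 0\<^sub>v m"
    using rowmult[OF E V i] rowmult[OF F V i] eq E F V i
    by (subst mult_minus_distrib_mat_vec[of _ m s], auto)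
  have "transpose_mat (map_mat (of_int :: int \<Rightarrow> rat) V) *\<^sub>v map_vec of_int (row E i - row F i)
       = map_vec of_int (transpose_mat V *\<^sub>v (row E i - row F i))"
    using V E F i by (simp add: map_mat_transpose[symmetric] of_int_hom.mult_mat_vec_hom)
  also have "\<dots> = 0\<^sub>v m" using z by auto
  finally have "map_vec (of_int :: int \<Rightarrow> rat) (row E i - row F i) = 0\<^sub>v s"
    using f V E F i unfolding full_row_rank_def by auto
  hence "row E i - row F i = 0\<^sub>v s" 
    by (intro eq_vecI, auto dest!: arg_cong[of _ _ "\<lambda>x. x $ _"]) 
  thus "row E i = row F i" using E F i
  proof (intro eq_vecI)
    fix j assume j: "j < dim_vec (row F i)"
    have "(row E i - row F i) $ j = 0" using `row E i - row F i = 0\<^sub>v s` j F by simp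
    thus "row E i $ j = row F i $ j" using j E F by simp
  qed (insert E F, simp)
qed

definition tr :: "int mat \<Rightarrow> int" where "tr M = (\<Sum>i<dim_row M. M $$ (i,i))"

lemma tr_comm:
  assumes A: "A \<in> carrier_mat r s" and B: "B \<in> carrier_mat s r"
  shows "tr (A * B) = tr (B * A)"
proof -
  have "tr (A * B) = (\<Sum>i<r. \<Sum>j<s. A $$ (i,j) * B $$ (j,i))"
    unfolding tr_def using A B by (simp add: scalar_prod_def atLeast0LessThan)
  also have "\<dots> = (\<Sum>j<s. \<Sum>i<r. B $$ (j,i) * A $$ (i,j))"
    by (subst sum.swap, simp add: mult.commute)
  also have "\<dots> = tr (B * A)"
    unfolding tr_def using A B by (simp add: scalar_prod_def atLeast0LessThan)
  finally show ?thesis .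
qed

lemma tr_one: "tr (1\<^sub>m n) = int n" unfolding tr_def by simp




lemma basis_dimcol:
  assumes X: "lattice_basis X L" and Y: "lattice_basis Y L"
  shows "dim_col X = dim_col Y"
proof -
  have "0\<^sub>v (dim_col X) \<in> L_R X" unfolding L_R_def
    by (rule CollectI, rule exI[of _ "0\<^sub>v (dim_row X)"], auto)
  hence "0\<^sub>v (dim_col X) \<in> L_R Y" using X Y unfolding lattice_basis_def by simp
  then obtain c where e: "0\<^sub>v (dim_col X) = transpose_mat Y *\<^sub>v c" unfolding L_R_def by auto
  have "dim_vec (transpose_mat Y *\<^sub>v c) = dim_col Y" by simp
  moreover have "dim_vec (0\<^sub>v (dim_col X) :: int vec) = dim_col X" by simp
  ultimately show ?thesis using e by metis
qed

lemma basis_rel: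
  assumes X: "lattice_basis X L" and Y: "lattice_basis Y L"
  shows "\<exists>U \<in> carrier_mat (dim_row X) (dim_row Y). X = U * Y"
proof -
  have dc: "dim_col X = dim_col Y" using basis_dimcol[OF X Y] .
  have "\<forall>i<dim_row X. \<exists>c. c \<in> carrier_vec (dim_row Y) \<and> row X i = transpose_mat Y *\<^sub>v c"
  proof (intro allI impI)
    fix i assume i: "i < dim_row X"
    have "row X i = transpose_mat X *\<^sub>v unit_vec (dim_row X) i"
      using i by (intro eq_vecI, auto)
    hence "row X i \<in> L_R X" unfolding L_R_def using i by auto
    hence "row X i \<in> L_R Y" using X Y unfolding lattice_basis_def by auto
    thus "\<exists>c. c \<in> carrier_vec (dim_row Y) \<and> row X i = transpose_mat Y *\<^sub>v c"
      unfolding L_R_def by auto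
  qed
  then obtain c where c: "\<And>i. i < dim_row X \<Longrightarrow> c i \<in> carrier_vec (dim_row Y) \<and> row X i = transpose_mat Y *\<^sub>v c i"
    by metis
  define U where "U = mat (dim_row X) (dim_row Y) (\<lambda>(i,j). c i $ j)"
  have U: "U \<in> carrier_mat (dim_row X) (dim_row Y)" unfolding U_def by auto
  have rU: "row U i = c i" if "i < dim_row X" for i
    using c[OF that] that unfolding U_def by (intro eq_vecI, auto)
  have "X = U * Y"
  proof (rule eq_matI)
    fix i j assume i: "i < dim_row (U * Y)" and j: "j < dim_col (U * Y)"
    have i': "i < dim_row X" using i U by auto
    have j': "j < dim_col Y" using j by auto
    have ci: "c i \<in> carrier_vec (dim_row Y)" using c[OF i'] by simp
    have cY: "col Y j \<in> carrier_vec (dim_row Y)" by simp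
    have "X $$ (i,j) = row X i $ j" using i' j' dc by simp
    also have "\<dots> = (transpose_mat Y *\<^sub>v c i) $ j" using c[OF i'] by simp
    also have "\<dots> = col Y j \<bullet> c i" using j' by simp
    also have "\<dots> = c i \<bullet> col Y j" using comm_scalar_prod[OF cY ci] .
    also have "\<dots> = (U * Y) $$ (i,j)" using rU[OF i'] i' j' U by simp
    finally show "X $$ (i,j) = (U * Y) $$ (i,j)" .
  qed (insert U dc, auto)
  with U show ?thesis by blast
qed




lemma basis_change:
  assumes V: "lattice_basis V L" and W: "lattice_basis W L"
  shows "dim_row W = dim_row V \<and> (\<exists>U \<in> carrier_mat (dim_row W) (dim_row W). W = U * V \<and> (det U = 1 \<or> det U = -1))"
proof -
  define r where "r = dim_row W"
  define s where "s = dim_row V"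
  define m where "m = dim_col V"
  have fV: "full_row_rank V" using V unfolding lattice_basis_def by auto
  have fW: "full_row_rank W" using W unfolding lattice_basis_def by auto
  have Vc: "V \<in> carrier_mat s m" unfolding s_def m_def by auto
  have Wc: "W \<in> carrier_mat r m" using basis_dimcol[OF V W] unfolding r_def m_def by auto
  obtain U where U: "U \<in> carrier_mat r s" and WU: "W = U * V"
    using basis_rel[OF W V] unfolding r_def s_def by auto
  obtain U' where U': "U' \<in> carrier_mat s r" and VU: "V = U' * W"
    using basis_rel[OF V W] unfolding r_def s_def by auto
  have "(U' * U) * V = 1\<^sub>m s * V"
  proof -
    have "(U' * U) * V = U' * (U * V)" using assoc_mult_mat[OF U' U Vc] .
    also have "U * V = W" using WU by simp
    also have "U' * W = V" using VU by simp
    finally show ?thesis using left_mult_one_mat[OF Vc] by simp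
  qed
  hence e1: "U' * U = 1\<^sub>m s" using frr_cancel[OF _ _ Vc fV, of "U' * U" s "1\<^sub>m s"] U U' by auto
  have "(U * U') * W = 1\<^sub>m r * W"
  proof -
    have "(U * U') * W = U * (U' * W)" using assoc_mult_mat[OF U U' Wc] .
    also have "U' * W = V" using VU by simp
    also have "U * V = W" using WU by simp
    finally show ?thesis using left_mult_one_mat[OF Wc] by simp
  qed
  hence e2: "U * U' = 1\<^sub>m r" using frr_cancel[OF _ _ Wc fW, of "U * U'" r "1\<^sub>m r"] U U' by auto
  have "int r = tr (U * U')" using e2 tr_one by simp
  also have "\<dots> = tr (U' * U)" using tr_comm[OF U U'] .
  also have "\<dots> = int s" using e1 tr_one by simp
  finally have "int s = int r" by simp
  hence rs: "r = s" by simp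
  have Us: "U \<in> carrier_mat r r" "U' \<in> carrier_mat r r" using U U' rs by auto
  have "det U * det U' = 1" using det_mult[OF Us] e2 by simp
  hence dU: "det U = 1 \<or> det U = -1" by (auto simp: zmult_eq_1_iff)
  have "dim_row W = dim_row V" using rs unfolding r_def s_def .
  moreover have "U \<in> carrier_mat (dim_row W) (dim_row W)" using Us(1) unfolding r_def .
  ultimately show ?thesis using WU dU by blast
qed

lemma basis_det_eq:
  assumes V: "lattice_basis V L" and W: "lattice_basis W L"
  shows "det (W * transpose_mat W) = det (V * transpose_mat V)"
proof -
  define r where "r = dim_row V"
  define m where "m = dim_col V"
  have Vc: "V \<in> carrier_mat r m" unfolding r_def m_def by auto
  have bc: "dim_row W = dim_row V \<and> (\<exists>U \<in> carrier_mat (dim_row W) (dim_row W). W = U * V \<and> (det U = 1 \<or> det U = -1))"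
    by (rule basis_change[OF V W])
  hence dr: "dim_row W = r" unfolding r_def by (rule conjunct1)
  from bc obtain U where U0: "U \<in> carrier_mat (dim_row W) (dim_row W)" and WU: "W = U * V" and dU: "det U = 1 \<or> det U = -1"
    by blast
  have U: "U \<in> carrier_mat r r" using U0 unfolding dr .
  have VV: "V * transpose_mat V \<in> carrier_mat r r" using Vc by simp
  have Vt: "transpose_mat V \<in> carrier_mat m r" using Vc by simp
  have Ut: "transpose_mat U \<in> carrier_mat r r" using U by simp
  have tW: "transpose_mat W = transpose_mat V * transpose_mat U"
    unfolding WU by (rule transpose_mult[OF U Vc])
  have "W * transpose_mat W = (U * V) * (transpose_mat V * transpose_mat U)"
    unfolding tW unfolding WU ..
  also have "\<dots> = U * (V * (transpose_mat V * transpose_mat U))"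
    by (rule assoc_mult_mat[OF U Vc mult_carrier_mat[OF Vt Ut]])
  also have "V * (transpose_mat V * transpose_mat U) = (V * transpose_mat V) * transpose_mat U"
    by (rule assoc_mult_mat[OF Vc Vt Ut, symmetric])
  finally have e: "W * transpose_mat W = U * ((V * transpose_mat V) * transpose_mat U)" .
  have "det (W * transpose_mat W) = det U * (det (V * transpose_mat V) * det (transpose_mat U))"
    unfolding e det_mult[OF U mult_carrier_mat[OF VV Ut]] det_mult[OF VV Ut] ..
  also have "det (transpose_mat U) = det U" by (rule det_transpose[OF U])
  finally have "det (W * transpose_mat W) = (det U * det U) * det (V * transpose_mat V)"
    by (simp only: ac_simps)
  moreover have "det U * det U = 1" using dU by auto
  ultimately show ?thesis by (metis mult_1)
qed

lemma lattice_det_eq: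
  assumes V: "lattice_basis V L"
  shows "lattice_det L = sqrt (real_of_int (det (V * transpose_mat V)))"
  unfolding lattice_det_def
proof (rule someI2)
  show "\<exists>W. lattice_basis W L \<and> sqrt (real_of_int (det (V * transpose_mat V))) = sqrt (real_of_int (det (W * transpose_mat W)))"
    using V by blast
next
  fix d assume "\<exists>W. lattice_basis W L \<and> d = sqrt (real_of_int (det (W * transpose_mat W)))"
  then obtain W where W: "lattice_basis W L" and d: "d = sqrt (real_of_int (det (W * transpose_mat W)))" by auto
  show "d = sqrt (real_of_int (det (V * transpose_mat V)))" using basis_det_eq[OF V W] d by simp
qed




lemma tcar: "A \<in> carrier_mat nr nc \<Longrightarrow> transpose_mat A \<in> carrier_mat nc nr" by simp

lemma det_sq_sym:
  assumes V: "V \<in> carrier_mat r r"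
  shows "det (V * transpose_mat V) = det V * det V"
  using det_mult[OF V tcar[OF V]] det_transpose[OF V] by simp

lemma LC_mult:
  assumes A0: "A0 \<in> carrier_mat r n" and U: "U \<in> carrier_mat r r" and V: "V \<in> carrier_mat r r"
    and L: "L_C A0 = L_R V"
  shows "L_C (U * A0) = L_R (V * transpose_mat U)"
proof -
  have tr: "transpose_mat (V * transpose_mat U) = U * transpose_mat V"
    using transpose_mult[OF V tcar[OF U]] by simp
  have "L_C (U * A0) = {U *\<^sub>v y | y. y \<in> L_C A0}"
  proof -
    have eq: "(U * A0) *\<^sub>v c = U *\<^sub>v (A0 *\<^sub>v c)" if "c \<in> carrier_vec n" for c
      using assoc_mult_mat_vec[OF U A0 that] .
    show ?thesis
    proof (rule equalityI; rule subsetI)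
      fix x assume "x \<in> L_C (U * A0)"
      then obtain c where c: "c \<in> carrier_vec n" and x: "x = (U * A0) *\<^sub>v c" unfolding L_C_def using A0 U by auto
      show "x \<in> {U *\<^sub>v y | y. y \<in> L_C A0}" unfolding L_C_def x eq[OF c] using c A0 by auto
    next
      fix x assume "x \<in> {U *\<^sub>v y | y. y \<in> L_C A0}"
      then obtain c where c: "c \<in> carrier_vec n" and x: "x = U *\<^sub>v (A0 *\<^sub>v c)" unfolding L_C_def using A0 U by auto
      show "x \<in> L_C (U * A0)" unfolding L_C_def
        by (rule CollectI, rule exI[of _ c], insert c eq[OF c] x A0 U, auto)
    qed
  qed
  also have "\<dots> = {U *\<^sub>v y | y. y \<in> L_R V}" unfolding L ..
  also have "\<dots> = L_R (V * transpose_mat U)"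
  proof -
    have eq: "(U * transpose_mat V) *\<^sub>v d = U *\<^sub>v (transpose_mat V *\<^sub>v d)" if "d \<in> carrier_vec r" for d
      using assoc_mult_mat_vec[OF U tcar[OF V] that] .
    show ?thesis
    proof (rule equalityI; rule subsetI)
      fix x assume "x \<in> {U *\<^sub>v y | y. y \<in> L_R V}"
      then obtain c where c: "c \<in> carrier_vec r" and x: "x = U *\<^sub>v (transpose_mat V *\<^sub>v c)" unfolding L_R_def using V U by auto
      show "x \<in> L_R (V * transpose_mat U)" unfolding L_R_def tr
        by (rule CollectI, rule exI[of _ c], insert c eq[OF c] x V U, auto)
    next
      fix x assume "x \<in> L_R (V * transpose_mat U)"
      then obtain c where c: "c \<in> carrier_vec r" and x: "x = (U * transpose_mat V) *\<^sub>v c" unfolding L_R_def tr using V U by auto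
      show "x \<in> {U *\<^sub>v y | y. y \<in> L_R V}" unfolding L_R_def x eq[OF c] using c V by auto
    qed
  qed
  finally show ?thesis .
qed

lemma ndet_eq:
  assumes A0: "A0 \<in> carrier_mat r n" and fA: "full_row_rank A0"
    and V: "V \<in> carrier_mat r r" and bV: "lattice_basis V (L_C A0)"
  shows "ndet (L_R A0) = lattice_det (L_R A0) / lattice_det (L_C A0)"
  unfolding ndet_def
proof (rule someI2)
  have "lattice_basis A0 (L_R A0)" using fA unfolding lattice_basis_def by simp
  thus "\<exists>M. lattice_basis M (L_R A0) \<and> lattice_det (L_R A0) / lattice_det (L_C A0) =
          lattice_det (L_R M) / lattice_det (L_C M)" by blast
next
  fix d assume "\<exists>M. lattice_basis M (L_R A0) \<and> d = lattice_det (L_R M) / lattice_det (L_C M)"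
  then obtain M where M: "lattice_basis M (L_R A0)" and d: "d = lattice_det (L_R M) / lattice_det (L_C M)"
    by blast
  have bA: "lattice_basis A0 (L_R A0)" using fA unfolding lattice_basis_def by simp
  have LM: "L_R M = L_R A0" using M unfolding lattice_basis_def by simp
  have bc: "dim_row M = dim_row A0 \<and> (\<exists>U \<in> carrier_mat (dim_row M) (dim_row M). M = U * A0 \<and> (det U = 1 \<or> det U = -1))"
    by (rule basis_change[OF bA M])
  hence dr: "dim_row M = r" using A0 by simp
  from bc obtain U where U0: "U \<in> carrier_mat (dim_row M) (dim_row M)" and MU: "M = U * A0"
    and dU: "det U = 1 \<or> det U = -1" by blast
  have U: "U \<in> carrier_mat r r" using U0 unfolding dr .
  have LV: "L_C A0 = L_R V" and fV: "full_row_rank V" using bV unfolding lattice_basis_def by auto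
  have LCM: "L_C M = L_R (V * transpose_mat U)" unfolding MU by (rule LC_mult[OF A0 U V LV])
  have dV: "det V \<noteq> 0" using frr_det[OF V fV] det_sq_sym[OF V] by simp
  have VU: "V * transpose_mat U \<in> carrier_mat r r" using V U by simp
  have dVU: "det (V * transpose_mat U) = det V * det U"
    using det_mult[OF V tcar[OF U]] det_transpose[OF U] by simp
  have "det (V * transpose_mat U) \<noteq> 0" unfolding dVU using dV dU by auto
  hence "full_row_rank (V * transpose_mat U)" by (rule det_frr[OF VU])
  hence bVU: "lattice_basis (V * transpose_mat U) (L_C M)" unfolding lattice_basis_def LCM by simp
  have "lattice_det (L_C M) = sqrt (real_of_int (det ((V * transpose_mat U) * transpose_mat (V * transpose_mat U))))"
    by (rule lattice_det_eq[OF bVU])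
  also have "det ((V * transpose_mat U) * transpose_mat (V * transpose_mat U)) = (det V * det U) * (det V * det U)"
    unfolding det_sq_sym[OF VU] dVU ..
  also have "\<dots> = det V * det V" using dU by auto
  also have "\<dots> = det (V * transpose_mat V)" using det_sq_sym[OF V] by simp
  also have "sqrt (real_of_int (det (V * transpose_mat V))) = lattice_det (L_C A0)"
    using lattice_det_eq[OF bV] by simp
  finally have "lattice_det (L_C M) = lattice_det (L_C A0)" .
  thus "d = lattice_det (L_R A0) / lattice_det (L_C A0)" unfolding d LM by simp
qed




definition reach :: "nat \<Rightarrow> int mat \<Rightarrow> int mat \<Rightarrow> bool" where
  "reach n T T' \<longleftrightarrow> (\<exists>P \<in> carrier_mat n n. (det P = 1 \<or> det P = -1) \<and> T' = P * T)"

lemma reach_refl: "T \<in> carrier_mat n k \<Longrightarrow> reach n T T"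
  unfolding reach_def by (rule bexI[of _ "1\<^sub>m n"], auto)

lemma reach_trans:
  assumes T: "T \<in> carrier_mat n k" and r1: "reach n T T2" and r2: "reach n T2 T3"
  shows "reach n T T3"
proof -
  obtain P1 where P1: "P1 \<in> carrier_mat n n" "det P1 = 1 \<or> det P1 = -1" "T2 = P1 * T"
    using r1 unfolding reach_def by blast
  obtain P2 where P2: "P2 \<in> carrier_mat n n" "det P2 = 1 \<or> det P2 = -1" "T3 = P2 * T2"
    using r2 unfolding reach_def by blast
  have "T3 = (P2 * P1) * T" using P1 P2 T by (simp add: assoc_mult_mat[of _ n n _ n _ k])
  moreover have "det (P2 * P1) = 1 \<or> det (P2 * P1) = -1"
    using det_mult[OF P2(1) P1(1)] P1(2) P2(2) by auto
  moreover have "P2 * P1 \<in> carrier_mat n n" using P1 P2 by simp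
  ultimately show ?thesis unfolding reach_def by blast
qed

lemma reach_carrier: "reach n T T' \<Longrightarrow> T \<in> carrier_mat n k \<Longrightarrow> T' \<in> carrier_mat n k"
  unfolding reach_def by auto

lemma reach_addrow:
  assumes T: "T \<in> carrier_mat n k" and ab: "a \<noteq> b" "b < n"
  shows "reach n T (addrow q a b T)"
  unfolding reach_def
  by (rule bexI[of _ "addrow_mat n q a b"], insert addrow_mat[OF T ab(2)] det_addrow_mat[OF ab(1)], auto)

lemma reach_swap:
  assumes T: "T \<in> carrier_mat n k" and ab: "a \<noteq> b" "a < n" "b < n"
  shows "reach n T (swaprows a b T)"
  unfolding reach_def
  by (rule bexI[of _ "swaprows_mat n a b"], insert swaprows_mat[OF T ab(2,3)] det_swaprows_mat[OF ab(2,3,1)], auto)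

lemma euclid:
  assumes "T \<in> carrier_mat n k" "a < n" "b < n" "a \<noteq> b" "j < k"
  shows "\<exists>T'. reach n T T' \<and> T' $$ (b,j) = 0
     \<and> (\<forall>i<n. i \<noteq> a \<and> i \<noteq> b \<longrightarrow> (\<forall>c<k. T' $$ (i,c) = T $$ (i,c)))
     \<and> (\<forall>c<k. T $$ (a,c) = 0 \<and> T $$ (b,c) = 0 \<longrightarrow> T' $$ (a,c) = 0 \<and> T' $$ (b,c) = 0)"
  using assms
proof (induction "nat \<bar>T $$ (b,j)\<bar>" arbitrary: T rule: less_induct)
  case less
  note T = less.prems(1) and ab = less.prems(2-4) and j = less.prems(5)
  show ?case
  proof (cases "T $$ (b,j) = 0")
    case True
    show ?thesis by (rule exI[of _ T], insert True reach_refl[OF T], auto)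
  next
    case False
    define q where "q = T $$ (a,j) div T $$ (b,j)"
    define T1 where "T1 = addrow (-q) a b T"
    define T2 where "T2 = swaprows a b T1"
    have T1c: "T1 \<in> carrier_mat n k" unfolding T1_def using T by simp
    have T2c: "T2 \<in> carrier_mat n k" unfolding T2_def using T1c by simp
    have r1: "reach n T T1" unfolding T1_def by (rule reach_addrow[OF T ab(3,2)])
    have r2: "reach n T1 T2" unfolding T2_def by (rule reach_swap[OF T1c ab(3,1,2)])
    have r12: "reach n T T2" by (rule reach_trans[OF T r1 r2])
    have e1: "T1 $$ (i,c) = (if i = a then -q * T $$ (b,c) + T $$ (a,c) else T $$ (i,c))"
      if "i < n" "c < k" for i c unfolding T1_def using T that by auto
    have e2: "T2 $$ (i,c) = (if i = a then T1 $$ (b,c) else if i = b then T1 $$ (a,c) else T1 $$ (i,c))"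
      if "i < n" "c < k" for i c unfolding T2_def using T1c that by auto
    have "T2 $$ (b,j) = T $$ (a,j) mod T $$ (b,j)"
      using e2[OF ab(2) j] e1[OF ab(1) j] ab j unfolding q_def
      by (simp add: minus_div_mult_eq_mod[symmetric] algebra_simps)
    hence lt: "nat \<bar>T2 $$ (b,j)\<bar> < nat \<bar>T $$ (b,j)\<bar>" using abs_mod_less[OF False, of "T $$ (a,j)"] False by simp
    obtain T' where T': "reach n T2 T'" "T' $$ (b,j) = 0"
      "\<forall>i<n. i \<noteq> a \<and> i \<noteq> b \<longrightarrow> (\<forall>c<k. T' $$ (i,c) = T2 $$ (i,c))"
      "\<forall>c<k. T2 $$ (a,c) = 0 \<and> T2 $$ (b,c) = 0 \<longrightarrow> T' $$ (a,c) = 0 \<and> T' $$ (b,c) = 0"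
      using less.hyps[OF lt T2c ab j] by blast
    show ?thesis
    proof (rule exI[of _ T'], intro conjI allI impI)
      show "reach n T T'" by (rule reach_trans[OF T r12 T'(1)])
      show "T' $$ (b,j) = 0" by (rule T'(2))
    next
      fix i c assume i: "i < n" "i \<noteq> a \<and> i \<noteq> b" and c: "c < k"
      show "T' $$ (i,c) = T $$ (i,c)" using T'(3) i c e1[OF i(1) c] e2[OF i(1) c] by auto
    next
      fix c assume c: "c < k" and z: "T $$ (a,c) = 0 \<and> T $$ (b,c) = 0"
      have "T2 $$ (a,c) = 0 \<and> T2 $$ (b,c) = 0"
        using e2[OF ab(1) c] e2[OF ab(2) c] e1[OF ab(1) c] e1[OF ab(2) c] z ab by auto
      thus "T' $$ (a,c) = 0" "T' $$ (b,c) = 0" using T'(4) c by auto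
    qed
  qed
qed




lemma colstep:
  assumes T: "T \<in> carrier_mat n k" and j: "j < k" "j < n"
    and z: "\<forall>i<n. \<forall>c<j. c < i \<longrightarrow> T $$ (i,c) = 0"
  shows "\<exists>T'. reach n T T' \<and> (\<forall>i<n. \<forall>c<Suc j. c < i \<longrightarrow> T' $$ (i,c) = 0)"
proof -
  have inner: "Suc j + d \<le> n \<Longrightarrow> \<exists>T'. reach n T T' \<and> (\<forall>i<n. \<forall>c<j. c < i \<longrightarrow> T' $$ (i,c) = 0)
      \<and> (\<forall>i. j < i \<and> i < Suc j + d \<longrightarrow> T' $$ (i,j) = 0)" for d
  proof (induction d)
    case 0
    show ?case by (rule exI[of _ T], insert reach_refl[OF T] z, auto)
  next
    case (Suc d)
    then obtain T1 where r1: "reach n T T1" and z1: "\<forall>i<n. \<forall>c<j. c < i \<longrightarrow> T1 $$ (i,c) = 0"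
      and z1': "\<forall>i. j < i \<and> i < Suc j + d \<longrightarrow> T1 $$ (i,j) = 0" by auto
    have T1: "T1 \<in> carrier_mat n k" by (rule reach_carrier[OF r1 T])
    define b where "b = Suc j + d"
    have b: "b < n" "j \<noteq> b" "j < b" using Suc.prems unfolding b_def by auto
    obtain T2 where r2: "reach n T1 T2" and z2: "T2 $$ (b,j) = 0"
      and same: "\<forall>i<n. i \<noteq> j \<and> i \<noteq> b \<longrightarrow> (\<forall>c<k. T2 $$ (i,c) = T1 $$ (i,c))"
      and pres: "\<forall>c<k. T1 $$ (j,c) = 0 \<and> T1 $$ (b,c) = 0 \<longrightarrow> T2 $$ (j,c) = 0 \<and> T2 $$ (b,c) = 0"
      using euclid[OF T1 j(2) b(1) b(2) j(1)] by blast
    show ?case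
    proof (rule exI[of _ T2], intro conjI allI impI)
      show "reach n T T2" by (rule reach_trans[OF T r1 r2])
    next
      fix i c assume i: "i < n" and c: "c < j" "c < i"
      show "T2 $$ (i,c) = 0"
      proof (cases "i = j \<or> i = b")
        case True
        have "T1 $$ (j,c) = 0" "T1 $$ (b,c) = 0" using z1 c b j by auto
        thus ?thesis using pres c j True by auto
      next
        case False
        thus ?thesis using same z1 i c j by auto
      qed
    next
      fix i assume i: "j < i \<and> i < Suc j + Suc d"
      show "T2 $$ (i,j) = 0"
      proof (cases "i = b")
        case True thus ?thesis using z2 by simp
      next
        case False
        hence id: "i < Suc j + d" using i unfolding b_def by auto
        hence "i < n" using b unfolding b_def by auto
        thus ?thesis using same z1' i False b j id by auto
      qed
    qed
  qed
  obtain T' where r: "reach n T T'" and z1: "\<forall>i<n. \<forall>c<j. c < i \<longrightarrow> T' $$ (i,c) = 0"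
    and z2: "\<forall>i. j < i \<and> i < Suc j + (n - Suc j) \<longrightarrow> T' $$ (i,j) = 0"
    using inner[of "n - Suc j"] j by auto
  show ?thesis
  proof (rule exI[of _ T'], intro conjI allI impI)
    show "reach n T T'" by (rule r)
  next
    fix i c assume i: "i < n" and c: "c < Suc j" "c < i"
    show "T' $$ (i,c) = 0"
    proof (cases "c = j")
      case True thus ?thesis using z2 i c j by auto
    next
      case False thus ?thesis using z1 i c by auto
    qed
  qed
qed

lemma hermite:
  assumes T: "T \<in> carrier_mat n k" and kn: "k \<le> n"
  shows "\<exists>T'. reach n T T' \<and> (\<forall>i<n. \<forall>c<k. c < i \<longrightarrow> T' $$ (i,c) = 0)"
proof -
  have "j \<le> k \<Longrightarrow> \<exists>T'. reach n T T' \<and> (\<forall>i<n. \<forall>c<j. c < i \<longrightarrow> T' $$ (i,c) = 0)" for j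
  proof (induction j)
    case 0 show ?case using reach_refl[OF T] by auto
  next
    case (Suc j)
    then obtain T1 where r1: "reach n T T1" and z: "\<forall>i<n. \<forall>c<j. c < i \<longrightarrow> T1 $$ (i,c) = 0" by auto
    have T1: "T1 \<in> carrier_mat n k" by (rule reach_carrier[OF r1 T])
    obtain T2 where r2: "reach n T1 T2" and z2: "\<forall>i<n. \<forall>c<Suc j. c < i \<longrightarrow> T2 $$ (i,c) = 0"
      using colstep[OF T1 _ _ z] Suc.prems kn by auto
    show ?case using reach_trans[OF T r1 r2] z2 by blast
  qed
  thus ?thesis by blast
qed




lemma mult_entry:
  assumes "A \<in> carrier_mat r s" "B \<in> carrier_mat s t" "i < r" "j < t"
  shows "(A * B) $$ (i,j) = (\<Sum>l<s. A $$ (i,l) * B $$ (l,j))"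
  using assms by (simp add: scalar_prod_def atLeast0LessThan)

lemma sum_split: "(\<Sum>l<k+m. f l) = (\<Sum>l<k. f l) + (\<Sum>l<m. f (k+l :: nat))"
  by (induction m) (auto simp: add.assoc)

locale invpair =
  fixes P Q :: "int mat" and k m :: nat
  assumes Pc: "P \<in> carrier_mat (k+m) (k+m)" and Qc: "Q \<in> carrier_mat (k+m) (k+m)"
    and PQ: "P * Q = 1\<^sub>m (k+m)" and QP: "Q * P = 1\<^sub>m (k+m)"
begin

definition "Q1 = mat (k+m) k (\<lambda>(i,j). Q $$ (i,j))"
definition "Q2 = mat (k+m) m (\<lambda>(i,j). Q $$ (i,k+j))"
definition "P1 = mat k (k+m) (\<lambda>(i,j). P $$ (i,j))"
definition "P2 = mat m (k+m) (\<lambda>(i,j). P $$ (k+i,j))"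

lemma carr: "Q1 \<in> carrier_mat (k+m) k" "Q2 \<in> carrier_mat (k+m) m"
  "P1 \<in> carrier_mat k (k+m)" "P2 \<in> carrier_mat m (k+m)"
  unfolding Q1_def Q2_def P1_def P2_def by auto

lemma PQe: "i < k+m \<Longrightarrow> j < k+m \<Longrightarrow> (\<Sum>l<k+m. P $$ (i,l) * Q $$ (l,j)) = (if i = j then 1 else 0)"
  using arg_cong[OF PQ, of "\<lambda>M. M $$ (i,j)"] mult_entry[OF Pc Qc, of i j] by simp

lemma QPe: "i < k+m \<Longrightarrow> j < k+m \<Longrightarrow> (\<Sum>l<k+m. Q $$ (i,l) * P $$ (l,j)) = (if i = j then 1 else 0)"
  using arg_cong[OF QP, of "\<lambda>M. M $$ (i,j)"] mult_entry[OF Qc Pc, of i j] by simp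

lemma P1Q1: "P1 * Q1 = 1\<^sub>m k"
proof (rule eq_matI)
  fix i j assume i: "i < dim_row (1\<^sub>m k)" and j: "j < dim_col (1\<^sub>m k)"
  have "(P1 * Q1) $$ (i,j) = (\<Sum>l<k+m. P $$ (i,l) * Q $$ (l,j))"
    using i j by (subst mult_entry[OF carr(3) carr(1)], auto simp: P1_def Q1_def)
  also have "\<dots> = 1\<^sub>m k $$ (i,j)" using i j by (subst PQe, auto)
  finally show "(P1 * Q1) $$ (i,j) = 1\<^sub>m k $$ (i,j)" .
qed (insert carr, auto)

lemma P2Q2: "P2 * Q2 = 1\<^sub>m m"
proof (rule eq_matI)
  fix i j assume i: "i < dim_row (1\<^sub>m m)" and j: "j < dim_col (1\<^sub>m m)"
  have "(P2 * Q2) $$ (i,j) = (\<Sum>l<k+m. P $$ (k+i,l) * Q $$ (l,k+j))"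
    using i j by (subst mult_entry[OF carr(4) carr(2)], auto simp: P2_def Q2_def)
  also have "\<dots> = 1\<^sub>m m $$ (i,j)" using i j by (subst PQe, auto)
  finally show "(P2 * Q2) $$ (i,j) = 1\<^sub>m m $$ (i,j)" .
qed (insert carr, auto)

lemma P2Q1: "P2 * Q1 = 0\<^sub>m m k"
proof (rule eq_matI)
  fix i j assume i: "i < dim_row (0\<^sub>m m k :: int mat)" and j: "j < dim_col (0\<^sub>m m k :: int mat)"
  have "(P2 * Q1) $$ (i,j) = (\<Sum>l<k+m. P $$ (k+i,l) * Q $$ (l,j))"
    using i j by (subst mult_entry[OF carr(4) carr(1)], auto simp: P2_def Q1_def)
  also have "\<dots> = 0\<^sub>m m k $$ (i,j)" using i j by (subst PQe, auto)
  finally show "(P2 * Q1) $$ (i,j) = 0\<^sub>m m k $$ (i,j)" .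
qed (insert carr, auto)

lemma decomp: "1\<^sub>m (k+m) = transpose_mat P1 * transpose_mat Q1 + transpose_mat P2 * transpose_mat Q2"
proof (rule eq_matI)
  fix i j assume i: "i < dim_row (transpose_mat P1 * transpose_mat Q1 + transpose_mat P2 * transpose_mat Q2)"
    and j: "j < dim_col (transpose_mat P1 * transpose_mat Q1 + transpose_mat P2 * transpose_mat Q2)"
  have i': "i < k+m" and j': "j < k+m" using i j carr by auto
  have "(transpose_mat P1 * transpose_mat Q1 + transpose_mat P2 * transpose_mat Q2) $$ (i,j)
     = (\<Sum>l<k. Q $$ (j,l) * P $$ (l,i)) + (\<Sum>l<m. Q $$ (j,k+l) * P $$ (k+l,i))"
    using i' j' carr
    by (simp add: P1_def P2_def Q1_def Q2_def scalar_prod_def atLeast0LessThan mult.commute)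
  also have "\<dots> = (\<Sum>l<k+m. Q $$ (j,l) * P $$ (l,i))" by (rule sum_split[symmetric])
  also have "\<dots> = 1\<^sub>m (k+m) $$ (i,j)" using i' j' by (subst QPe, auto)
  finally show "1\<^sub>m (k+m) $$ (i,j) = (transpose_mat P1 * transpose_mat Q1 + transpose_mat P2 * transpose_mat Q2) $$ (i,j)" by simp
qed (insert carr, auto)

end




context invpair begin

definition "MM = mat (k+m) (k+m) (\<lambda>(i,j). if j < k then Q $$ (i,j) else P $$ (j,i))"

lemma MMc: "MM \<in> carrier_mat (k+m) (k+m)" unfolding MM_def by simp

lemma QtM: "transpose_mat Q * MM = four_block_mat (transpose_mat Q1 * Q1) (0\<^sub>m k m) (transpose_mat Q2 * Q1) (1\<^sub>m m)"
proof (rule eq_matI)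
  fix i j assume i: "i < dim_row (four_block_mat (transpose_mat Q1 * Q1) (0\<^sub>m k m) (transpose_mat Q2 * Q1) (1\<^sub>m m))"
    and j: "j < dim_col (four_block_mat (transpose_mat Q1 * Q1) (0\<^sub>m k m) (transpose_mat Q2 * Q1) (1\<^sub>m m))"
  have i': "i < k+m" and j': "j < k+m" using i j carr by auto
  have lhs: "(transpose_mat Q * MM) $$ (i,j) = (\<Sum>l<k+m. Q $$ (l,i) * MM $$ (l,j))"
    using i' j' by (subst mult_entry[OF _ MMc], insert Qc, auto)
  show "(transpose_mat Q * MM) $$ (i,j) = four_block_mat (transpose_mat Q1 * Q1) (0\<^sub>m k m) (transpose_mat Q2 * Q1) (1\<^sub>m m) $$ (i,j)"
  proof (cases "j < k")
    case True
    have "(transpose_mat Q * MM) $$ (i,j) = (\<Sum>l<k+m. Q $$ (l,i) * Q $$ (l,j))"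
      unfolding lhs using True j' by (intro sum.cong, auto simp: MM_def)
    moreover have "four_block_mat (transpose_mat Q1 * Q1) (0\<^sub>m k m) (transpose_mat Q2 * Q1) (1\<^sub>m m) $$ (i,j)
       = (\<Sum>l<k+m. Q $$ (l,i) * Q $$ (l,j))"
      using i' j' True carr by (auto simp: Q1_def Q2_def scalar_prod_def atLeast0LessThan)
    ultimately show ?thesis by simp
  next
    case False
    have "(transpose_mat Q * MM) $$ (i,j) = (\<Sum>l<k+m. P $$ (j,l) * Q $$ (l,i))"
      unfolding lhs using False j' by (intro sum.cong, auto simp: MM_def)
    also have "\<dots> = (if j = i then 1 else 0)" using PQe[OF j' i'] .
    finally show ?thesis using i' j' False carr by auto
  qed
qed (insert carr MMc Qc, auto)

lemma MtM: "transpose_mat MM * MM = four_block_mat (transpose_mat Q1 * Q1) (0\<^sub>m k m) (0\<^sub>m m k) (P2 * transpose_mat P2)"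
proof (rule eq_matI)
  fix i j assume i: "i < dim_row (four_block_mat (transpose_mat Q1 * Q1) (0\<^sub>m k m) (0\<^sub>m m k) (P2 * transpose_mat P2))"
    and j: "j < dim_col (four_block_mat (transpose_mat Q1 * Q1) (0\<^sub>m k m) (0\<^sub>m m k) (P2 * transpose_mat P2))"
  have i': "i < k+m" and j': "j < k+m" using i j carr by auto
  have lhs: "(transpose_mat MM * MM) $$ (i,j) = (\<Sum>l<k+m. MM $$ (l,i) * MM $$ (l,j))"
    using i' j' by (subst mult_entry[OF _ MMc], insert MMc, auto)
  consider (a) "i < k" "j < k" | (b) "i < k" "\<not> j < k" | (c) "\<not> i < k" "j < k" | (d) "\<not> i < k" "\<not> j < k" by blast
  thus "(transpose_mat MM * MM) $$ (i,j) = four_block_mat (transpose_mat Q1 * Q1) (0\<^sub>m k m) (0\<^sub>m m k) (P2 * transpose_mat P2) $$ (i,j)"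
  proof cases
    case a
    have "(transpose_mat MM * MM) $$ (i,j) = (\<Sum>l<k+m. Q $$ (l,i) * Q $$ (l,j))"
      unfolding lhs using a i' j' by (intro sum.cong, auto simp: MM_def)
    thus ?thesis using i' j' a carr by (auto simp: Q1_def scalar_prod_def atLeast0LessThan)
  next
    case b
    have "(transpose_mat MM * MM) $$ (i,j) = (\<Sum>l<k+m. P $$ (j,l) * Q $$ (l,i))"
      unfolding lhs using b i' j' by (intro sum.cong, auto simp: MM_def mult.commute)
    also have "\<dots> = 0" using PQe[OF j' i'] b by auto
    finally show ?thesis using i' j' b carr by auto
  next
    case c
    have "(transpose_mat MM * MM) $$ (i,j) = (\<Sum>l<k+m. P $$ (i,l) * Q $$ (l,j))"
      unfolding lhs using c i' j' by (intro sum.cong, auto simp: MM_def)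
    also have "\<dots> = 0" using PQe[OF i' j'] c by auto
    finally show ?thesis using i' j' c carr by auto
  next
    case d
    have "(transpose_mat MM * MM) $$ (i,j) = (\<Sum>l<k+m. P $$ (i,l) * P $$ (j,l))"
      unfolding lhs using d i' j' by (intro sum.cong, auto simp: MM_def)
    thus ?thesis using i' j' d carr by (auto simp: P2_def scalar_prod_def atLeast0LessThan)
  qed
qed (insert carr MMc, auto)

lemma detQ: "det Q = 1 \<or> det Q = -1"
proof -
  have "det P * det Q = 1" using det_mult[OF Pc Qc] PQ by simp
  thus ?thesis by (auto simp: zmult_eq_1_iff)
qed

lemma Dequal:
  assumes D: "det (transpose_mat Q1 * Q1) \<noteq> 0"
  shows "det (P2 * transpose_mat P2) = det (transpose_mat Q1 * Q1)"
proof -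
  define D where "D = det (transpose_mat Q1 * Q1)"
  define D' where "D' = det (P2 * transpose_mat P2)"
  have c1: "transpose_mat Q1 * Q1 \<in> carrier_mat k k" using carr by simp
  have c2: "transpose_mat Q2 * Q1 \<in> carrier_mat m k" using carr by simp
  have c3: "P2 * transpose_mat P2 \<in> carrier_mat m m" using carr by simp
  have "det (transpose_mat Q * MM) = D * det (1\<^sub>m m)"
    unfolding QtM D_def by (rule det_four_block_mat_upper_right_zero[OF c1 refl c2], simp)
  hence e1: "det Q * det MM = D"
    using det_mult[OF tcar[OF Qc] MMc] det_transpose[OF Qc] by simp
  have "det (transpose_mat MM * MM) = D * D'"
    unfolding MtM D_def D'_def by (rule det_four_block_mat_upper_right_zero[OF c1 refl _ c3], simp)
  hence e2: "det MM * det MM = D * D'"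
    using det_mult[OF tcar[OF MMc] MMc] det_transpose[OF MMc] by simp
  have "D * D = (det Q * det Q) * (det MM * det MM)" unfolding e1[symmetric] by (simp add: ac_simps)
  also have "det Q * det Q = 1" using detQ by auto
  finally have "D * D = D * D'" using e2 by simp
  hence "D' = D" using D unfolding D_def by simp
  thus ?thesis unfolding D_def D'_def .
qed

end




lemma sqrt_ratio:
  assumes z: "z \<noteq> (0::int)"
  shows "sqrt (real_of_int (z * g * z)) / \<bar>real_of_int z\<bar> = sqrt (real_of_int g)"
proof -
  have "real_of_int (z * g * z) = real_of_int z * real_of_int z * real_of_int g" by simp
  hence "sqrt (real_of_int (z * g * z)) = \<bar>real_of_int z\<bar> * sqrt (real_of_int g)"
    by (simp add: real_sqrt_mult)
  thus ?thesis using z by simp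
qed

lemma ldet_sq:
  assumes V: "V \<in> carrier_mat r r" and b: "lattice_basis V L"
  shows "lattice_det L = \<bar>real_of_int (det V)\<bar>"
proof -
  have "lattice_det L = sqrt (real_of_int (det (V * transpose_mat V)))" by (rule lattice_det_eq[OF b])
  also have "det (V * transpose_mat V) = det V * det V" by (rule det_sq_sym[OF V])
  finally show ?thesis by (simp add: real_sqrt_mult)
qed

lemma inv_from_det:
  assumes Pc: "P \<in> carrier_mat n n" and dP: "det P = 1 \<or> det P = -1"
  shows "P * (det P \<cdot>\<^sub>m adj_mat P) = 1\<^sub>m n" "(det P \<cdot>\<^sub>m adj_mat P) * P = 1\<^sub>m n"
    "det P \<cdot>\<^sub>m adj_mat P \<in> carrier_mat n n"
proof -
  have dd: "det P * det P = 1" using dP by auto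
  have ac: "adj_mat P \<in> carrier_mat n n" using adj_mat(1)[OF Pc] .
  have "P * (det P \<cdot>\<^sub>m adj_mat P) = det P \<cdot>\<^sub>m (P * adj_mat P)" by (rule mult_smult_distrib[OF Pc ac])
  also have "P * adj_mat P = det P \<cdot>\<^sub>m 1\<^sub>m n" by (rule adj_mat(2)[OF Pc])
  finally show "P * (det P \<cdot>\<^sub>m adj_mat P) = 1\<^sub>m n" using dd by (intro eq_matI, auto)
  have "(det P \<cdot>\<^sub>m adj_mat P) * P = det P \<cdot>\<^sub>m (adj_mat P * P)" by (rule mult_smult_assoc_mat[OF ac Pc])
  also have "adj_mat P * P = det P \<cdot>\<^sub>m 1\<^sub>m n" by (rule adj_mat(3)[OF Pc])
  finally show "(det P \<cdot>\<^sub>m adj_mat P) * P = 1\<^sub>m n" using dd by (intro eq_matI, auto)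
  show "det P \<cdot>\<^sub>m adj_mat P \<in> carrier_mat n n" using ac by simp
qed




lemma main_km:
  fixes A B :: "int mat" and k m :: nat
  assumes A: "A \<in> carrier_mat k (k+m)" and B: "B \<in> carrier_mat m (k+m)"
    and fA: "full_row_rank A" and fB: "full_row_rank B"
    and AB: "A * transpose_mat B = 0\<^sub>m k m"
  shows "ndet (L_R A) = ndet (L_R B) \<and>
    sqrt (real_of_int (det (A * transpose_mat A))) / lattice_det (L_C A) =
    sqrt (real_of_int (det (B * transpose_mat B))) / lattice_det (L_C B)"
proof -
  define T where "T = transpose_mat A"
  have Tc: "T \<in> carrier_mat (k+m) k" unfolding T_def using A by simp
  obtain Z where rZ: "reach (k+m) T Z" and zZ: "\<forall>i<k+m. \<forall>c<k. c < i \<longrightarrow> Z $$ (i,c) = 0"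
    using hermite[OF Tc] by auto
  obtain P where Pc: "P \<in> carrier_mat (k+m) (k+m)" and dP: "det P = 1 \<or> det P = -1" and ZPT: "Z = P * T"
    using rZ unfolding reach_def by blast
  define Q where "Q = det P \<cdot>\<^sub>m adj_mat P"
  have PQ: "P * Q = 1\<^sub>m (k+m)" and QP: "Q * P = 1\<^sub>m (k+m)" and Qc: "Q \<in> carrier_mat (k+m) (k+m)"
    unfolding Q_def using inv_from_det[OF Pc dP] by auto
  interpret ip: invpair P Q k m using Pc Qc PQ QP by (unfold_locales)
  note carr = ip.carr
  define Z1 where "Z1 = mat k k (\<lambda>(i,j). Z $$ (i,j))"
  have Z1c: "Z1 \<in> carrier_mat k k" unfolding Z1_def by simp
  have Zc: "Z \<in> carrier_mat (k+m) k" unfolding ZPT using Pc Tc by simp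
  have QZ: "Q * Z = T"
  proof -
    have "Q * Z = (Q * P) * T" unfolding ZPT by (rule assoc_mult_mat[OF Qc Pc Tc, symmetric])
    thus ?thesis unfolding QP using Tc by simp
  qed
  have TQZ: "T = ip.Q1 * Z1"
  proof (rule eq_matI)
    fix i j assume i: "i < dim_row (ip.Q1 * Z1)" and j: "j < dim_col (ip.Q1 * Z1)"
    have i': "i < k+m" and j': "j < k" using i j carr Z1c by auto
    have "T $$ (i,j) = (\<Sum>l<k+m. Q $$ (i,l) * Z $$ (l,j))"
      unfolding QZ[symmetric] by (rule mult_entry[OF Qc Zc i' j'])
    also have "\<dots> = (\<Sum>l<k. Q $$ (i,l) * Z $$ (l,j)) + (\<Sum>l<m. Q $$ (i,k+l) * Z $$ (k+l,j))"
      by (rule sum_split)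
    also have "(\<Sum>l<m. Q $$ (i,k+l) * Z $$ (k+l,j)) = 0"
      using zZ j' by (intro sum.neutral, auto)
    also have "(\<Sum>l<k. Q $$ (i,l) * Z $$ (l,j)) = (ip.Q1 * Z1) $$ (i,j)"
      using i' j' by (subst mult_entry[OF carr(1) Z1c], auto simp: ip.Q1_def Z1_def)
    finally show "T $$ (i,j) = (ip.Q1 * Z1) $$ (i,j)" by simp
  qed (insert Tc carr Z1c, auto)
  have AZ: "A = transpose_mat Z1 * transpose_mat ip.Q1"
  proof -
    have "A = transpose_mat T" unfolding T_def by simp
    also have "\<dots> = transpose_mat Z1 * transpose_mat ip.Q1" unfolding TQZ by (rule transpose_mult[OF carr(1) Z1c])
    finally show ?thesis .
  qed
  define G where "G = transpose_mat ip.Q1 * ip.Q1"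
  have Gc: "G \<in> carrier_mat k k" unfolding G_def using carr by simp
  have Z1t: "transpose_mat Z1 \<in> carrier_mat k k" using Z1c by simp
  have Q1t: "transpose_mat ip.Q1 \<in> carrier_mat k (k+m)" using carr by simp
  have AAt: "A * transpose_mat A = transpose_mat Z1 * (G * Z1)"
  proof -
    have tA: "transpose_mat A = ip.Q1 * Z1" using TQZ unfolding T_def .
    have "A * transpose_mat A = (transpose_mat Z1 * transpose_mat ip.Q1) * (ip.Q1 * Z1)" unfolding tA unfolding AZ ..
    also have "\<dots> = transpose_mat Z1 * (transpose_mat ip.Q1 * (ip.Q1 * Z1))"
      by (rule assoc_mult_mat[OF Z1t Q1t mult_carrier_mat[OF carr(1) Z1c]])
    also have "transpose_mat ip.Q1 * (ip.Q1 * Z1) = G * Z1"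
      unfolding G_def by (rule assoc_mult_mat[OF Q1t carr(1) Z1c, symmetric])
    finally show ?thesis .
  qed
  have detAA: "det (A * transpose_mat A) = det Z1 * det G * det Z1"
    unfolding AAt det_mult[OF Z1t mult_carrier_mat[OF Gc Z1c]] det_mult[OF Gc Z1c] det_transpose[OF Z1c]
    by simp
  have nzA: "det (A * transpose_mat A) \<noteq> 0" by (rule frr_det[OF A fA])
  hence dZ1: "det Z1 \<noteq> 0" and dG: "det G \<noteq> 0" unfolding detAA by auto
  have P1t: "transpose_mat ip.P1 \<in> carrier_mat (k+m) k" using carr by simp
  have Av: "A *\<^sub>v c = transpose_mat Z1 *\<^sub>v (transpose_mat ip.Q1 *\<^sub>v c)" if "c \<in> carrier_vec (k+m)" for c
    unfolding AZ by (rule assoc_mult_mat_vec[OF Z1t Q1t that])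
  have surjQ: "transpose_mat ip.Q1 *\<^sub>v (transpose_mat ip.P1 *\<^sub>v d) = d" if d: "d \<in> carrier_vec k" for d
  proof -
    have "transpose_mat ip.Q1 *\<^sub>v (transpose_mat ip.P1 *\<^sub>v d) = (transpose_mat ip.Q1 * transpose_mat ip.P1) *\<^sub>v d"
      by (rule assoc_mult_mat_vec[OF Q1t P1t d, symmetric])
    also have "transpose_mat ip.Q1 * transpose_mat ip.P1 = transpose_mat (ip.P1 * ip.Q1)"
      by (rule transpose_mult[OF carr(3) carr(1), symmetric])
    finally show ?thesis unfolding ip.P1Q1 using d by simp
  qed
  have LCA: "L_C A = L_R Z1"
  proof (rule equalityI; rule subsetI)
    fix x assume "x \<in> L_C A"
    then obtain c where c: "c \<in> carrier_vec (k+m)" and x: "x = A *\<^sub>v c" unfolding L_C_def using A by auto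
    show "x \<in> L_R Z1" unfolding L_R_def x Av[OF c] using c Q1t Z1c by auto
  next
    fix x assume "x \<in> L_R Z1"
    then obtain d where d: "d \<in> carrier_vec k" and x: "x = transpose_mat Z1 *\<^sub>v d" unfolding L_R_def using Z1c by auto
    have c: "transpose_mat ip.P1 *\<^sub>v d \<in> carrier_vec (k+m)" using P1t d by simp
    have "x = A *\<^sub>v (transpose_mat ip.P1 *\<^sub>v d)" unfolding Av[OF c] surjQ[OF d] x ..
    thus "x \<in> L_C A" unfolding L_C_def using c A by auto
  qed
  have bZ1: "lattice_basis Z1 (L_C A)"
    unfolding lattice_basis_def LCA using det_frr[OF Z1c dZ1] by simp
  have ldA: "lattice_det (L_C A) = \<bar>real_of_int (det Z1)\<bar>" by (rule ldet_sq[OF Z1c bZ1])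
  have Bt: "transpose_mat B \<in> carrier_mat (k+m) m" using B by simp
  define Y where "Y = transpose_mat ip.Q1 * transpose_mat B"
  have Yc: "Y \<in> carrier_mat k m" unfolding Y_def using Q1t Bt by simp
  have ZY: "transpose_mat Z1 * Y = 0\<^sub>m k m"
  proof -
    have "A * transpose_mat B = transpose_mat Z1 * Y" unfolding AZ Y_def by (rule assoc_mult_mat[OF Z1t Q1t Bt])
    thus ?thesis using AB by simp
  qed
  have Y0: "Y = 0\<^sub>m k m"
  proof -
    have adc: "adj_mat (transpose_mat Z1) \<in> carrier_mat k k" by (rule adj_mat(1)[OF Z1t])
    have "adj_mat (transpose_mat Z1) * (transpose_mat Z1 * Y) = (adj_mat (transpose_mat Z1) * transpose_mat Z1) * Y"
      by (rule assoc_mult_mat[OF adc Z1t Yc, symmetric])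
    also have "adj_mat (transpose_mat Z1) * transpose_mat Z1 = det (transpose_mat Z1) \<cdot>\<^sub>m 1\<^sub>m k" by (rule adj_mat(3)[OF Z1t])
    also have "det (transpose_mat Z1) = det Z1" by (rule det_transpose[OF Z1c])
    finally have e: "adj_mat (transpose_mat Z1) * (transpose_mat Z1 * Y) = (det Z1 \<cdot>\<^sub>m 1\<^sub>m k) * Y" .
    have "(det Z1 \<cdot>\<^sub>m 1\<^sub>m k) * Y = 0\<^sub>m k m" using e unfolding ZY using adc by simp
    hence "det Z1 \<cdot>\<^sub>m Y = 0\<^sub>m k m" using mult_smult_assoc_mat[OF one_carrier_mat Yc, of "det Z1"] Yc by simp
    hence sm: "det Z1 \<cdot>\<^sub>m Y = 0\<^sub>m k m" .
    show ?thesis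
    proof (rule eq_matI)
      fix i j assume i: "i < dim_row (0\<^sub>m k m :: int mat)" and j: "j < dim_col (0\<^sub>m k m :: int mat)"
      have "(det Z1 \<cdot>\<^sub>m Y) $$ (i,j) = 0" unfolding sm using i j by simp
      hence "det Z1 * Y $$ (i,j) = 0" using i j Yc by simp
      thus "Y $$ (i,j) = 0\<^sub>m k m $$ (i,j)" using dZ1 i j by simp
    qed (insert Yc, auto)
  qed
  have Q2t: "transpose_mat ip.Q2 \<in> carrier_mat m (k+m)" using carr by simp
  have P2t: "transpose_mat ip.P2 \<in> carrier_mat (k+m) m" using carr by simp
  define X where "X = transpose_mat ip.Q2 * transpose_mat B"
  have Xc: "X \<in> carrier_mat m m" unfolding X_def using Q2t Bt by simp
  have BtX: "transpose_mat B = transpose_mat ip.P2 * X"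
  proof -
    have c1: "transpose_mat ip.P1 * transpose_mat ip.Q1 \<in> carrier_mat (k+m) (k+m)" using P1t Q1t by simp
    have c2: "transpose_mat ip.P2 * transpose_mat ip.Q2 \<in> carrier_mat (k+m) (k+m)" using P2t Q2t by simp
    have "transpose_mat B = 1\<^sub>m (k+m) * transpose_mat B" using Bt by simp
    also have "\<dots> = (transpose_mat ip.P1 * transpose_mat ip.Q1) * transpose_mat B
        + (transpose_mat ip.P2 * transpose_mat ip.Q2) * transpose_mat B"
      unfolding ip.decomp by (rule add_mult_distrib_mat[OF c1 c2 Bt])
    also have "(transpose_mat ip.P1 * transpose_mat ip.Q1) * transpose_mat B = transpose_mat ip.P1 * Y"
      unfolding Y_def by (rule assoc_mult_mat[OF P1t Q1t Bt])
    also have "(transpose_mat ip.P2 * transpose_mat ip.Q2) * transpose_mat B = transpose_mat ip.P2 * X"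
      unfolding X_def by (rule assoc_mult_mat[OF P2t Q2t Bt])
    also have "transpose_mat ip.P1 * Y = 0\<^sub>m (k+m) m" unfolding Y0 using P1t by simp
    finally show ?thesis using P2t Xc by simp
  qed
  have BX: "B = transpose_mat X * ip.P2"
  proof -
    have "B = transpose_mat (transpose_mat B)" by simp
    also have "\<dots> = transpose_mat X * ip.P2" unfolding BtX using transpose_mult[OF P2t Xc] by simp
    finally show ?thesis .
  qed
  define H where "H = ip.P2 * transpose_mat ip.P2"
  have Hc: "H \<in> carrier_mat m m" unfolding H_def using carr by simp
  have Xt: "transpose_mat X \<in> carrier_mat m m" using Xc by simp
  have BBt: "B * transpose_mat B = transpose_mat X * (H * X)"
  proof -
    have "B * transpose_mat B = (transpose_mat X * ip.P2) * (transpose_mat ip.P2 * X)" unfolding BtX unfolding BX ..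
    also have "\<dots> = transpose_mat X * (ip.P2 * (transpose_mat ip.P2 * X))"
      by (rule assoc_mult_mat[OF Xt carr(4) mult_carrier_mat[OF P2t Xc]])
    also have "ip.P2 * (transpose_mat ip.P2 * X) = H * X"
      unfolding H_def by (rule assoc_mult_mat[OF carr(4) P2t Xc, symmetric])
    finally show ?thesis .
  qed
  have detBB: "det (B * transpose_mat B) = det X * det H * det X"
    unfolding BBt det_mult[OF Xt mult_carrier_mat[OF Hc Xc]] det_mult[OF Hc Xc] det_transpose[OF Xc]
    by simp
  have nzB: "det (B * transpose_mat B) \<noteq> 0" by (rule frr_det[OF B fB])
  hence dX: "det X \<noteq> 0" unfolding detBB by auto
  have Bv: "B *\<^sub>v c = transpose_mat X *\<^sub>v (ip.P2 *\<^sub>v c)" if "c \<in> carrier_vec (k+m)" for c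
    unfolding BX by (rule assoc_mult_mat_vec[OF Xt carr(4) that])
  have surjP: "ip.P2 *\<^sub>v (ip.Q2 *\<^sub>v d) = d" if d: "d \<in> carrier_vec m" for d
  proof -
    have "ip.P2 *\<^sub>v (ip.Q2 *\<^sub>v d) = (ip.P2 * ip.Q2) *\<^sub>v d"
      by (rule assoc_mult_mat_vec[OF carr(4) carr(2) d, symmetric])
    thus ?thesis unfolding ip.P2Q2 using d by simp
  qed
  have LCB: "L_C B = L_R X"
  proof (rule equalityI; rule subsetI)
    fix x assume "x \<in> L_C B"
    then obtain c where c: "c \<in> carrier_vec (k+m)" and x: "x = B *\<^sub>v c" unfolding L_C_def using B by auto
    show "x \<in> L_R X" unfolding L_R_def x Bv[OF c] using c carr Xc by auto
  next
    fix x assume "x \<in> L_R X"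
    then obtain d where d: "d \<in> carrier_vec m" and x: "x = transpose_mat X *\<^sub>v d" unfolding L_R_def using Xc by auto
    have c: "ip.Q2 *\<^sub>v d \<in> carrier_vec (k+m)" using carr d by simp
    have "x = B *\<^sub>v (ip.Q2 *\<^sub>v d)" unfolding Bv[OF c] surjP[OF d] x ..
    thus "x \<in> L_C B" unfolding L_C_def using c B by auto
  qed
  have bX: "lattice_basis X (L_C B)"
    unfolding lattice_basis_def LCB using det_frr[OF Xc dX] by simp
  have ldB: "lattice_det (L_C B) = \<bar>real_of_int (det X)\<bar>" by (rule ldet_sq[OF Xc bX])
  have HG: "det H = det G" unfolding H_def G_def by (rule ip.Dequal, insert dG, simp add: G_def)
  have rA: "sqrt (real_of_int (det (A * transpose_mat A))) / lattice_det (L_C A) = sqrt (real_of_int (det G))"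
    unfolding ldA detAA by (rule sqrt_ratio[OF dZ1])
  have rB: "sqrt (real_of_int (det (B * transpose_mat B))) / lattice_det (L_C B) = sqrt (real_of_int (det G))"
    unfolding ldB detBB HG by (rule sqrt_ratio[OF dX])
  have lRA: "lattice_det (L_R A) = sqrt (real_of_int (det (A * transpose_mat A)))"
    by (rule lattice_det_eq, unfold lattice_basis_def, insert fA, simp)
  have lRB: "lattice_det (L_R B) = sqrt (real_of_int (det (B * transpose_mat B)))"
    by (rule lattice_det_eq, unfold lattice_basis_def, insert fB, simp)
  have nA: "ndet (L_R A) = sqrt (real_of_int (det G))"
    using ndet_eq[OF A fA Z1c bZ1] lRA rA by simp
  have nB: "ndet (L_R B) = sqrt (real_of_int (det G))"
    using ndet_eq[OF B fB Xc bX] lRB rB by simp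
  show ?thesis using nA nB rA rB by simp
qed



theorem theorem2p5:
  fixes A B :: "int mat" and k n :: nat
  assumes "0 < k" and "k < n"
    and "A \<in> carrier_mat k n" and "B \<in> carrier_mat (n - k) n"
    and "full_row_rank A" and "full_row_rank B"
    and "A * transpose_mat B = 0\<^sub>m k (n - k)"
  shows "ndet (L_R A) = ndet (L_R B) \<and>
    sqrt (real_of_int (det (A * transpose_mat A))) / lattice_det (L_C A) =
    sqrt (real_of_int (det (B * transpose_mat B))) / lattice_det (L_C B)"
proof -
  have n: "n = k + (n - k)" using assms(2) by simp
  have A: "A \<in> carrier_mat k (k + (n - k))" using assms(3) n by simp
  have B: "B \<in> carrier_mat (n - k) (k + (n - k))" using assms(4) n by simp
  show ?thesis by (rule main_km[OF A B assms(5,6,7)])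
qed

end
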